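(* Let $N\ge1$. Consider elastic $N$-soliton solutions of KPII, each described by the set $\{[e_n,g_n]\}_{n=1}^N$ of distinct index pairs with $e_n<g_n$, where $e_1,\dots,e_N$ are the pivot columns and $g_1,\dots,g_N$ the non-pivot columns of its $N\times 2N$ coefficient matrix $A$ (so $\{e_n\}\sqcup\{g_n\}=\{1,\dots,2N\}$). Then: (i) With the pivots ordered as $e_1<e_2<\dots<e_N$, one has $e_1=1$, $e_N<2N$, and $n\le e_n\le 2n-1$ for each $n=1,\dots,N$; the number of possible choices of the pivot set is the Catalan number $C_N=\frac{(2N)!}{N!\,(N+1)!}$. (ii) For a fixed ordered pivot set $\{e_1<\dots<e_N\}$, the number of possible (unordered) choices of non-pivot indices $\{g_1,\dots,g_N\}$ paired with the pivots such that $e_n<g_n$ for all $n$ is $\prod_{n=1}^N(2n-e_n)$. (iii) The total number of ways of choosing the $N$ distinct pairs $\{[e_n,g_n]\}_{n=1}^N$ (partitioning $\{1,\dots,2N\}$) is $(2N-1)!!$.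
   Context: Setting: $k_1<\dots<k_{2N}$ real, $\theta_m=k_mx+k_m^2y+k_m^3t+\theta_{0m}$, $A$ a real $N\times 2N$ matrix in reduced row-echelon form of rank $N$, all nonzero $N\times N$ minors positive, every column having a nonzero entry and every row having a nonzero entry besides its pivot, and satisfying the duality condition $A(m_1,\dots,m_N)=0\iff A(l_1,\dots,l_N)=0$ for every disjoint partition $\{m_i\}\sqcup\{l_i\}=\{1,\dots,2N\}$ (here $A(m_1,\dots,m_N)$ is the minor on those columns). The $\tau$-function is $\tau=\sum_{m_1<\dots<m_N}A(m_1,\dots,m_N)e^{\theta_{m_1}+\dots+\theta_{m_N}}\prod_{s<r}(k_{m_r}-k_{m_s})$, and $u=2(\log\tau)_{xx}$ solves KPII $(-4u_t+u_{xxx}+6uu_x)_x+3u_{yy}=0$; such $u$ are the elastic $N$-soliton solutions. Each such solution has $N$ asymptotic line solitons as $y\to\pm\infty$ labeled by the pairs $[e_n,g_n]$, i.e. localized near the lines $\theta_{e_n}=\theta_{g_n}$ with amplitude $k_{g_n}-k_{e_n}$ and direction $k_{g_n}+k_{e_n}$. *)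

theory Defs
  imports "HOL-Analysis.Analysis"
begin

text \<open>Coefficient matrices are real N x 2N matrices given as functions
  nat => nat => real, rows indexed by 1..N, columns by 1..2N (1-based as in the paper).\<close>

definition minor :: "nat \<Rightarrow> (nat \<Rightarrow> nat \<Rightarrow> real) \<Rightarrow> nat set \<Rightarrow> real" where
  "minor N A S = (\<Sum>p | p permutes {1..N}.
      of_int (sign p) * (\<Prod>i\<in>{1..N}. A i (sorted_list_of_set S ! (p i - 1))))"

definition pivot_col :: "nat \<Rightarrow> (nat \<Rightarrow> nat \<Rightarrow> real) \<Rightarrow> nat \<Rightarrow> nat" where
  "pivot_col N A i = (LEAST j. 1 \<le> j \<and> j \<le> 2*N \<and> A i j \<noteq> 0)"

definition rref_rank :: "nat \<Rightarrow> (nat \<Rightarrow> nat \<Rightarrow> real) \<Rightarrow> bool" where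
  "rref_rank N A \<longleftrightarrow>
     (\<forall>i\<in>{1..N}. \<exists>j\<in>{1..2*N}. A i j \<noteq> 0) \<and>
     (\<forall>i\<in>{1..N}. \<forall>i'\<in>{1..N}. i < i' \<longrightarrow> pivot_col N A i < pivot_col N A i') \<and>
     (\<forall>i\<in>{1..N}. A i (pivot_col N A i) = 1) \<and>
     (\<forall>i\<in>{1..N}. \<forall>k\<in>{1..N}. k \<noteq> i \<longrightarrow> A k (pivot_col N A i) = 0)"

definition pivot_set :: "nat \<Rightarrow> (nat \<Rightarrow> nat \<Rightarrow> real) \<Rightarrow> nat set" where
  "pivot_set N A = pivot_col N A ` {1..N}"

definition elastic_soliton_matrix :: "nat \<Rightarrow> (nat \<Rightarrow> nat \<Rightarrow> real) \<Rightarrow> bool" where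
  "elastic_soliton_matrix N A \<longleftrightarrow>
     rref_rank N A \<and>
     (\<forall>S. S \<subseteq> {1..2*N} \<and> card S = N \<longrightarrow> minor N A S \<noteq> 0 \<longrightarrow> minor N A S > 0) \<and>
     (\<forall>j\<in>{1..2*N}. \<exists>i\<in>{1..N}. A i j \<noteq> 0) \<and>
     (\<forall>i\<in>{1..N}. \<exists>j\<in>{1..2*N}. j \<noteq> pivot_col N A i \<and> A i j \<noteq> 0) \<and>
     (\<forall>S. S \<subseteq> {1..2*N} \<and> card S = N \<longrightarrow>
          (minor N A S = 0 \<longleftrightarrow> minor N A ({1..2*N} - S) = 0))"

definition nth_elem :: "nat set \<Rightarrow> nat \<Rightarrow> nat" where
  "nth_elem E n = sorted_list_of_set E ! (n - 1)"

definition possible_pivot_sets :: "nat \<Rightarrow> nat set set" where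
  "possible_pivot_sets N = {E. E \<subseteq> {1..2*N} \<and> card E = N \<and>
      (\<forall>n\<in>{1..N}. n \<le> nth_elem E n \<and> nth_elem E n \<le> 2*n - 1)}"

definition pairings_for :: "nat \<Rightarrow> nat set \<Rightarrow> (nat \<times> nat) set set" where
  "pairings_for N E = {P. P \<subseteq> E \<times> ({1..2*N} - E) \<and>
      (\<forall>e\<in>E. \<exists>!g. (e, g) \<in> P) \<and>
      (\<forall>g\<in>{1..2*N} - E. \<exists>!e. (e, g) \<in> P) \<and>
      (\<forall>(e, g)\<in>P. e < g)}"

definition all_pairings :: "nat \<Rightarrow> (nat \<times> nat) set set" where
  "all_pairings N = {P. (\<forall>(e, g)\<in>P. e < g \<and> e \<in> {1..2*N} \<and> g \<in> {1..2*N}) \<and>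
      (\<forall>x\<in>{1..2*N}. \<exists>!p. p \<in> P \<and> (x = fst p \<or> x = snd p))}"

definition odd_double_fact :: "nat \<Rightarrow> nat" where
  "odd_double_fact N = (\<Prod>k\<in>{1..N}. 2*k - 1)"

end

theory Submission
  imports Defs
begin


lemma sl_less:
  fixes E :: "nat set"
  assumes "finite E" "j < card {x\<in>E. x < a}"
  shows "sorted_list_of_set E ! j < a"
proof (rule ccontr)
  let ?L = "sorted_list_of_set E"
  assume H: "\<not> ?L ! j < a"
  have jc: "j < card E" using assms card_mono[of E "{x\<in>E. x < a}"] by auto
  have "{x\<in>E. x < a} \<subseteq> (\<lambda>k. ?L ! k) ` {..<j}"
  proof
    fix x assume x: "x \<in> {x\<in>E. x < a}"
    then have "x \<in> set ?L" using assms by simp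
    then obtain k where k: "k < length ?L" "?L ! k = x" by (auto simp: in_set_conv_nth)
    have "k < j"
    proof (rule ccontr)
      assume "\<not> k < j"
      then have "?L ! j \<le> ?L ! k" using k sorted_nth_mono[OF sorted_sorted_list_of_set, of j k E] by simp
      then show False using H x k by auto
    qed
    then show "x \<in> (\<lambda>k. ?L ! k) ` {..<j}" using k by auto
  qed
  then have "card {x\<in>E. x < a} \<le> j" using card_image_le[of "{..<j}"] card_mono
    by (metis (no_types, lifting) card_lessThan finite_imageI finite_lessThan order_trans)
  then show False using assms by auto
qed

lemma sl_card_le:
  fixes E :: "nat set"
  assumes "finite E" "j < card E"
  shows "card {x\<in>E. x \<le> sorted_list_of_set E ! j} = Suc j"
proof -
  let ?L = "sorted_list_of_set E"
  have len: "length ?L = card E" by simp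
  have st: "sorted_wrt (<) ?L" by (rule strict_sorted_list_of_set)
  have "{x\<in>E. x \<le> ?L ! j} = (\<lambda>k. ?L ! k) ` {..j}"
  proof
    show "{x\<in>E. x \<le> ?L ! j} \<subseteq> (\<lambda>k. ?L ! k) ` {..j}"
    proof
      fix x assume x: "x \<in> {x\<in>E. x \<le> ?L ! j}"
      then have "x \<in> set ?L" using assms by simp
      then obtain k where k: "k < length ?L" "?L ! k = x" by (auto simp: in_set_conv_nth)
      have "k \<le> j"
      proof (rule ccontr)
        assume "\<not> k \<le> j"
        then have "?L ! j < ?L ! k" using k sorted_wrt_nth_less[OF st] by auto
        then show False using x k by auto
      qed
      then show "x \<in> (\<lambda>k. ?L ! k) ` {..j}" using k by auto
    qed
    show "(\<lambda>k. ?L ! k) ` {..j} \<subseteq> {x\<in>E. x \<le> ?L ! j}"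
    proof
      fix x assume "x \<in> (\<lambda>k. ?L ! k) ` {..j}"
      then obtain k where k: "k \<le> j" "x = ?L ! k" by auto
      then have "k < length ?L" using assms len by simp
      then have "x \<in> set ?L" using k nth_mem by blast
      moreover have "x \<le> ?L ! j" using k sorted_nth_mono[OF sorted_sorted_list_of_set] assms len by auto
      ultimately show "x \<in> {x\<in>E. x \<le> ?L ! j}" using assms by auto
    qed
  qed
  moreover have "inj_on (\<lambda>k. ?L ! k) {..j}"
    using inj_on_nth[OF distinct_sorted_list_of_set, of "{..j}" E] assms len by auto
  ultimately show ?thesis by (simp add: card_image)
qed

lemma nth_elem_le_iff:
  fixes E :: "nat set"
  assumes "finite E" "1 \<le> n" "n \<le> card E"
  shows "nth_elem E n \<le> a \<longleftrightarrow> n \<le> card {x\<in>E. x \<le> a}"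
proof
  assume "nth_elem E n \<le> a"
  then have "{x\<in>E. x \<le> nth_elem E n} \<subseteq> {x\<in>E. x \<le> a}" by auto
  then have "card {x\<in>E. x \<le> nth_elem E n} \<le> card {x\<in>E. x \<le> a}" using assms by (intro card_mono) auto
  moreover have "card {x\<in>E. x \<le> nth_elem E n} = n"
    using sl_card_le[OF assms(1), of "n-1"] assms unfolding nth_elem_def by auto
  ultimately show "n \<le> card {x\<in>E. x \<le> a}" by simp
next
  assume "n \<le> card {x\<in>E. x \<le> a}"
  moreover have "{x\<in>E. x \<le> a} = {x\<in>E. x < Suc a}" by auto
  ultimately have "n - 1 < card {x\<in>E. x < Suc a}" using assms(2) by simp
  then have "sorted_list_of_set E ! (n-1) < Suc a" by (rule sl_less[OF assms(1)])
  then show "nth_elem E n \<le> a" unfolding nth_elem_def by simp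
qed

lemma nth_elem_in:
  fixes E :: "nat set"
  assumes "finite E" "1 \<le> n" "n \<le> card E"
  shows "nth_elem E n \<in> E"
proof -
  have "n - 1 < length (sorted_list_of_set E)" using assms by simp
  then have "sorted_list_of_set E ! (n-1) \<in> set (sorted_list_of_set E)" by (rule nth_mem)
  then show ?thesis using assms(1) unfolding nth_elem_def by simp
qed

lemma nth_elem_card_le:
  fixes E :: "nat set"
  assumes "finite E" "1 \<le> n" "n \<le> card E"
  shows "card {x\<in>E. x \<le> nth_elem E n} = n"
proof -
  have "n - 1 < card E" using assms by simp
  from sl_card_le[OF assms(1) this] show ?thesis using assms(2) unfolding nth_elem_def by simp
qed




definition PM :: "nat set \<Rightarrow> (nat \<times> nat) set set" where
  "PM X = {P. (\<forall>(e, g)\<in>P. e < g \<and> e \<in> X \<and> g \<in> X) \<and>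
      (\<forall>x\<in>X. \<exists>!p. p \<in> P \<and> (x = fst p \<or> x = snd p))}"

lemma PM_pair: "Q \<in> PM Z \<Longrightarrow> (a, b) \<in> Q \<Longrightarrow> a < b \<and> a \<in> Z \<and> b \<in> Z"
  unfolding PM_def by fast

lemma PM_sub: "PM X \<subseteq> Pow (X \<times> X)"
  unfolding PM_def by fast

lemma PM_finite: "finite X \<Longrightarrow> finite (PM X)"
  using PM_sub by (meson finite_Pow_iff finite_SigmaI finite_subset)

lemma ex1_eq: "\<exists>!x. P x \<Longrightarrow> P a \<Longrightarrow> P b \<Longrightarrow> a = b" by blast

lemma PM_decomp:
  assumes fin: "finite X" and ne: "X \<noteq> {}" and mdef: "m = Max X"
  shows "PM X = (\<Union>e\<in>X - {m}. insert (e, m) ` PM (X - {e, m}))"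
proof
  have mX: "m \<in> X" using fin ne mdef by simp
  have mmax: "\<And>x. x \<in> X \<Longrightarrow> x \<le> m" using fin mdef by simp
  show "PM X \<subseteq> (\<Union>e\<in>X - {m}. insert (e, m) ` PM (X - {e, m}))"
  proof
    fix P assume P: "P \<in> PM X"
    have pairs: "\<And>e g. (e, g) \<in> P \<Longrightarrow> e < g \<and> e \<in> X \<and> g \<in> X" using PM_pair[OF P] by blast
    have uniq: "\<And>x. x \<in> X \<Longrightarrow> \<exists>!p. p \<in> P \<and> (x = fst p \<or> x = snd p)" using P unfolding PM_def by blast
    obtain p where p: "p \<in> P" "m = fst p \<or> m = snd p" using uniq[OF mX] by blast
    obtain a b where ab: "p = (a, b)" by (cases p)
    have abX: "a < b" "a \<in> X" "b \<in> X" using pairs p ab by auto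
    have bm: "b = m"
    proof (rule ccontr)
      assume "b \<noteq> m"
      then have "a = m" using p ab by simp
      then show False using abX mmax[of b] by simp
    qed
    have am: "a < m" using abX bm by simp
    have aP: "(a, m) \<in> P" using p ab bm by simp
    define Q where "Q = P - {(a, m)}"
    have PQ: "P = insert (a, m) Q" unfolding Q_def using aP by auto
    have only_a: "q = (a, m)" if "q \<in> P" "a = fst q \<or> a = snd q" for q
      using ex1_eq[OF uniq[OF abX(2)], of q "(a, m)"] that aP by simp
    have only_m: "q = (a, m)" if "q \<in> P" "m = fst q \<or> m = snd q" for q
      using ex1_eq[OF uniq[OF mX], of q "(a, m)"] that aP by simp
    have "Q \<in> PM (X - {a, m})"
      unfolding PM_def
    proof (intro CollectI conjI ballI)
      fix q assume q: "q \<in> Q"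
      obtain e g where eg: "q = (e, g)" by (cases q)
      have qP: "q \<in> P" and qne: "q \<noteq> (a, m)" using q Q_def by auto
      have "e \<noteq> a" using only_a[OF qP] qne eg by auto
      moreover have "g \<noteq> a" using only_a[OF qP] qne eg by auto
      moreover have "e \<noteq> m" using only_m[OF qP] qne eg by auto
      moreover have "g \<noteq> m" using only_m[OF qP] qne eg by auto
      moreover have "e < g \<and> e \<in> X \<and> g \<in> X" using pairs qP eg by simp
      ultimately show "case q of (e, g) \<Rightarrow> e < g \<and> e \<in> X - {a, m} \<and> g \<in> X - {a, m}"
        using eg by simp
    next
      fix x assume x: "x \<in> X - {a, m}"
      then have ux: "\<exists>!p. p \<in> P \<and> (x = fst p \<or> x = snd p)" using uniq by simp
      then obtain q where q: "q \<in> P" "x = fst q \<or> x = snd q" by blast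
      have qne: "q \<noteq> (a, m)" using q x by auto
      show "\<exists>!p. p \<in> Q \<and> (x = fst p \<or> x = snd p)"
      proof (rule ex1I[of _ q])
        show "q \<in> Q \<and> (x = fst q \<or> x = snd q)" using q qne Q_def by simp
      next
        fix q' assume "q' \<in> Q \<and> (x = fst q' \<or> x = snd q')"
        then have "q' \<in> P \<and> (x = fst q' \<or> x = snd q')" using Q_def by simp
        then show "q' = q" using ex1_eq[OF ux] q by blast
      qed
    qed
    moreover have "a \<in> X - {m}" using abX am by simp
    ultimately show "P \<in> (\<Union>e\<in>X - {m}. insert (e, m) ` PM (X - {e, m}))"
      using PQ by blast
  qed
next
  have mX: "m \<in> X" using assms by simp
  have mmax: "\<And>x. x \<in> X \<Longrightarrow> x \<le> m" using assms by simp
  show "(\<Union>e\<in>X - {m}. insert (e, m) ` PM (X - {e, m})) \<subseteq> PM X"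
  proof
    fix P assume "P \<in> (\<Union>e\<in>X - {m}. insert (e, m) ` PM (X - {e, m}))"
    then obtain e Q where e: "e \<in> X" "e \<noteq> m" and Q: "Q \<in> PM (X - {e, m})" and PQ: "P = insert (e, m) Q"
      by blast
    have em: "e < m" using e mmax by (simp add: le_neq_implies_less)
    have qpairs: "\<And>a b. (a, b) \<in> Q \<Longrightarrow> a < b \<and> a \<in> X - {e, m} \<and> b \<in> X - {e, m}"
      using PM_pair[OF Q] by blast
    have quniq: "\<And>x. x \<in> X - {e, m} \<Longrightarrow> \<exists>!p. p \<in> Q \<and> (x = fst p \<or> x = snd p)"
      using Q unfolding PM_def by blast
    show "P \<in> PM X"
      unfolding PM_def
    proof (intro CollectI conjI ballI)
      fix q assume qP: "q \<in> P"
      obtain a b where ab: "q = (a, b)" by (cases q)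
      show "case q of (a, b) \<Rightarrow> a < b \<and> a \<in> X \<and> b \<in> X"
      proof (cases "q = (e, m)")
        case True then show ?thesis using em e mX by simp
      next
        case False then have "(a, b) \<in> Q" using qP PQ ab by blast
        then show ?thesis using qpairs ab by simp
      qed
    next
      fix x assume x: "x \<in> X"
      show "\<exists>!p. p \<in> P \<and> (x = fst p \<or> x = snd p)"
      proof (cases "x = e \<or> x = m")
        case True
        have nq: "\<not> (x = fst q \<or> x = snd q)" if "q \<in> Q" for q
        proof -
          obtain a b where ab: "q = (a, b)" by (cases q)
          then show ?thesis using qpairs[of a b] that True by auto
        qed
        show ?thesis
        proof (rule ex1I[of _ "(e, m)"])
          show "(e, m) \<in> P \<and> (x = fst (e, m) \<or> x = snd (e, m))" using True PQ by auto
        next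
          fix q assume "q \<in> P \<and> (x = fst q \<or> x = snd q)"
          then show "q = (e, m)" using nq PQ by blast
        qed
      next
        case False
        then have "x \<in> X - {e, m}" using x by simp
        from quniq[OF this] obtain q where q: "q \<in> Q" "x = fst q \<or> x = snd q" by blast
        show ?thesis
        proof (rule ex1I[of _ q])
          show "q \<in> P \<and> (x = fst q \<or> x = snd q)" using q PQ by simp
        next
          fix q' assume q': "q' \<in> P \<and> (x = fst q' \<or> x = snd q')"
          then have "q' \<noteq> (e, m)" using False by auto
          then have "q' \<in> Q" using q' PQ by simp
          then show "q' = q" using ex1_eq[OF quniq[OF \<open>x \<in> X - {e, m}\<close>]] q q' by blast
        qed
      qed
    qed
  qed
qed

lemma PM_card:
  "finite X \<Longrightarrow> card X = 2 * k \<Longrightarrow> card (PM X) = odd_double_fact k"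
proof (induction k arbitrary: X)
  case 0
  then have "X = {}" by simp
  then have "PM X = {{}}" unfolding PM_def by auto
  then show ?case by (simp add: odd_double_fact_def)
next
  case (Suc k)
  have ne: "X \<noteq> {}" using Suc.prems by auto
  define m where "m = Max X"
  have mX: "m \<in> X" using Suc.prems ne m_def by simp
  have fin: "\<And>e. finite (PM (X - {e, m}))" using Suc.prems PM_finite by simp
  have injs: "\<And>e. inj_on (insert (e, m)) (PM (X - {e, m}))"
  proof (rule inj_onI)
    fix e A B assume A: "A \<in> PM (X - {e, m})" and B: "B \<in> PM (X - {e, m})" and AB: "insert (e, m) A = insert (e, m) B"
    have "(e, m) \<notin> A" using PM_pair[OF A] by auto
    moreover have "(e, m) \<notin> B" using PM_pair[OF B] by auto
    ultimately show "A = B" using AB by (metis insert_ident)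
  qed
  have cards: "\<And>e. e \<in> X - {m} \<Longrightarrow> card (insert (e, m) ` PM (X - {e, m})) = odd_double_fact k"
  proof -
    fix e assume e: "e \<in> X - {m}"
    have "card (X - {e, m}) = 2 * k" using Suc.prems e mX by (simp add: card_Diff_subset)
    then have "card (PM (X - {e, m})) = odd_double_fact k" using Suc.IH Suc.prems by simp
    then show "card (insert (e, m) ` PM (X - {e, m})) = odd_double_fact k"
      using card_image[OF injs] by simp
  qed
  have disj: "\<And>e e'. e \<in> X - {m} \<Longrightarrow> e' \<in> X - {m} \<Longrightarrow> e \<noteq> e' \<Longrightarrow>
      insert (e, m) ` PM (X - {e, m}) \<inter> insert (e', m) ` PM (X - {e', m}) = {}"
  proof -
    fix e e' assume "e \<in> X - {m}" "e' \<in> X - {m}" "e \<noteq> e'"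
    show "insert (e, m) ` PM (X - {e, m}) \<inter> insert (e', m) ` PM (X - {e', m}) = {}"
    proof (rule ccontr)
      assume "insert (e, m) ` PM (X - {e, m}) \<inter> insert (e', m) ` PM (X - {e', m}) \<noteq> {}"
      then obtain A B where A: "A \<in> PM (X - {e, m})" and B: "B \<in> PM (X - {e', m})"
        and AB: "insert (e, m) A = insert (e', m) B" by blast
      have "(e, m) \<in> B" using AB \<open>e \<noteq> e'\<close> by (metis insertI1 insert_iff prod.inject)
      then show False using PM_pair[OF B] by auto
    qed
  qed
  have "card (PM X) = (\<Sum>e\<in>X - {m}. card (insert (e, m) ` PM (X - {e, m})))"
    unfolding PM_decomp[OF Suc.prems(1) ne m_def]
    by (rule card_UN_disjoint) (use Suc.prems fin disj in auto)
  also have "\<dots> = card (X - {m}) * odd_double_fact k" using cards by simp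
  also have "card (X - {m}) = 2 * k + 1" using Suc.prems mX by simp
  finally show ?case unfolding odd_double_fact_def by simp
qed

lemma part3: "card (all_pairings N) = odd_double_fact N"
proof -
  have "all_pairings N = PM {1..2*N}" unfolding all_pairings_def PM_def by simp
  then show ?thesis using PM_card[of "{1..2*N}" N] by simp
qed




lemma ex1_eq': "\<exists>!x. P x \<Longrightarrow> P a \<Longrightarrow> P b \<Longrightarrow> a = b" by blast

definition RR :: "nat set \<Rightarrow> nat set \<Rightarrow> (nat \<times> nat) set set" where
  "RR E G = {P. P \<subseteq> E \<times> G \<and>
      (\<forall>e\<in>E. \<exists>!g. (e, g) \<in> P) \<and>
      (\<forall>g\<in>G. \<exists>!e. (e, g) \<in> P) \<and>
      (\<forall>(e, g)\<in>P. e < g)}"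

lemma RR_finite: "finite E \<Longrightarrow> finite G \<Longrightarrow> finite (RR E G)"
proof -
  assume "finite E" "finite G"
  moreover have "RR E G \<subseteq> Pow (E \<times> G)" unfolding RR_def by blast
  ultimately show ?thesis by (meson finite_Pow_iff finite_SigmaI finite_subset)
qed

lemma RR_decomp:
  assumes fin: "finite E" and ne: "E \<noteq> {}" and mdef: "m = Max E"
  shows "RR E G = (\<Union>g\<in>{g\<in>G. m < g}. insert (m, g) ` RR (E - {m}) (G - {g}))"
proof
  have mE: "m \<in> E" using fin ne mdef by simp
  show "RR E G \<subseteq> (\<Union>g\<in>{g\<in>G. m < g}. insert (m, g) ` RR (E - {m}) (G - {g}))"
  proof
    fix P assume P: "P \<in> RR E G"
    have sub: "P \<subseteq> E \<times> G" and ue: "\<And>e. e \<in> E \<Longrightarrow> \<exists>!g. (e, g) \<in> P"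
      and ug: "\<And>g. g \<in> G \<Longrightarrow> \<exists>!e. (e, g) \<in> P" and lt: "\<And>e g. (e, g) \<in> P \<Longrightarrow> e < g"
      using P unfolding RR_def by auto
    obtain g where g: "(m, g) \<in> P" using ue[OF mE] by blast
    have gG: "g \<in> G" using g sub by auto
    have mg: "m < g" using lt g by simp
    define Q where "Q = P - {(m, g)}"
    have PQ: "P = insert (m, g) Q" unfolding Q_def using g by auto
    have "Q \<in> RR (E - {m}) (G - {g})"
      unfolding RR_def
    proof (intro CollectI conjI ballI subsetI)
      fix q assume q: "q \<in> Q"
      obtain a b where ab: "q = (a, b)" by (cases q)
      have qP: "(a, b) \<in> P" and qne: "(a, b) \<noteq> (m, g)" using q Q_def ab by auto
      have "a \<noteq> m" using ex1_eq'[OF ue[OF mE], of b g] qP g qne by auto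
      moreover have "b \<noteq> g" using ex1_eq'[OF ug[OF gG], of a m] qP g qne by auto
      ultimately show "q \<in> (E - {m}) \<times> (G - {g})" using ab qP sub by auto
    next
      fix e assume e: "e \<in> E - {m}"
      then have u: "\<exists>!g. (e, g) \<in> P" using ue by simp
      then obtain g' where g': "(e, g') \<in> P" by blast
      show "\<exists>!g. (e, g) \<in> Q"
      proof (rule ex1I[of _ g'])
        show "(e, g') \<in> Q" using g' e Q_def by simp
      next
        fix y assume "(e, y) \<in> Q" then have "(e, y) \<in> P" using Q_def by simp
        then show "y = g'" using ex1_eq'[OF u] g' by blast
      qed
    next
      fix b assume b: "b \<in> G - {g}"
      then have u: "\<exists>!e. (e, b) \<in> P" using ug by simp
      then obtain a where a: "(a, b) \<in> P" by blast
      show "\<exists>!e. (e, b) \<in> Q"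
      proof (rule ex1I[of _ a])
        show "(a, b) \<in> Q" using a b Q_def by simp
      next
        fix y assume "(y, b) \<in> Q" then have "(y, b) \<in> P" using Q_def by simp
        then show "y = a" using ex1_eq'[OF u] a by blast
      qed
    next
      fix q assume "q \<in> Q"
      then show "case q of (e, g) \<Rightarrow> e < g" using lt Q_def by auto
    qed
    then show "P \<in> (\<Union>g\<in>{g\<in>G. m < g}. insert (m, g) ` RR (E - {m}) (G - {g}))"
      using PQ gG mg by blast
  qed
next
  show "(\<Union>g\<in>{g\<in>G. m < g}. insert (m, g) ` RR (E - {m}) (G - {g})) \<subseteq> RR E G"
  proof
    have mE: "m \<in> E" using fin ne mdef by simp
    fix P assume "P \<in> (\<Union>g\<in>{g\<in>G. m < g}. insert (m, g) ` RR (E - {m}) (G - {g}))"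
    then obtain g Q where g: "g \<in> G" "m < g" and Q: "Q \<in> RR (E - {m}) (G - {g})" and PQ: "P = insert (m, g) Q"
      by blast
    have sub: "Q \<subseteq> (E - {m}) \<times> (G - {g})" and ue: "\<And>e. e \<in> E - {m} \<Longrightarrow> \<exists>!g. (e, g) \<in> Q"
      and ug: "\<And>b. b \<in> G - {g} \<Longrightarrow> \<exists>!e. (e, b) \<in> Q" and lt: "\<And>e g. (e, g) \<in> Q \<Longrightarrow> e < g"
      using Q unfolding RR_def by auto
    show "P \<in> RR E G"
      unfolding RR_def
    proof (intro CollectI conjI ballI subsetI)
      fix q assume "q \<in> P" then show "q \<in> E \<times> G" using PQ sub mE g by auto
    next
      fix e assume e: "e \<in> E"
      show "\<exists>!y. (e, y) \<in> P"
      proof (cases "e = m")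
        case True
        show ?thesis
        proof (rule ex1I[of _ g])
          show "(e, g) \<in> P" using PQ True by simp
        next
          fix y assume "(e, y) \<in> P"
          moreover have "(e, y) \<notin> Q" using sub True by auto
          ultimately show "y = g" using PQ True by simp
        qed
      next
        case False
        then have u: "\<exists>!y. (e, y) \<in> Q" using ue e by simp
        then obtain y where y: "(e, y) \<in> Q" by blast
        show ?thesis
        proof (rule ex1I[of _ y])
          show "(e, y) \<in> P" using PQ y by simp
        next
          fix z assume "(e, z) \<in> P"
          then have "(e, z) \<in> Q" using PQ False by simp
          then show "z = y" using ex1_eq'[OF u] y by blast
        qed
      qed
    next
      fix b assume b: "b \<in> G"
      show "\<exists>!y. (y, b) \<in> P"
      proof (cases "b = g")
        case True
        show ?thesis
        proof (rule ex1I[of _ m])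
          show "(m, b) \<in> P" using PQ True by simp
        next
          fix y assume "(y, b) \<in> P"
          moreover have "(y, b) \<notin> Q" using sub True by auto
          ultimately show "y = m" using PQ True by simp
        qed
      next
        case False
        then have u: "\<exists>!y. (y, b) \<in> Q" using ug b by simp
        then obtain y where y: "(y, b) \<in> Q" by blast
        show ?thesis
        proof (rule ex1I[of _ y])
          show "(y, b) \<in> P" using PQ y by simp
        next
          fix z assume "(z, b) \<in> P"
          then have "(z, b) \<in> Q" using PQ False by simp
          then show "z = y" using ex1_eq'[OF u] y by blast
        qed
      qed
    next
      fix q assume "q \<in> P"
      then show "case q of (e, g) \<Rightarrow> e < g" using PQ lt g by auto
    qed
  qed
qed

lemma RR_card:
  "finite E \<Longrightarrow> finite G \<Longrightarrow> card E = k \<Longrightarrow> card G = k \<Longrightarrow>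
   card (RR E G) = (\<Prod>e\<in>E. card {g\<in>G. e < g} - card {e'\<in>E. e < e'})"
proof (induction k arbitrary: E G)
  case 0
  then have "E = {}" "G = {}" by auto
  then have "RR E G = {{}}" unfolding RR_def by auto
  then show ?case using \<open>E = {}\<close> by simp
next
  case (Suc k)
  have ne: "E \<noteq> {}" using Suc.prems by auto
  define m where "m = Max E"
  have mE: "m \<in> E" using Suc.prems ne m_def by simp
  have mmax: "\<And>x. x \<in> E \<Longrightarrow> x \<le> m" using Suc.prems m_def by simp
  define f where "f = (\<lambda>e. card {g\<in>G. e < g} - card {e'\<in>E. e < e'})"
  have fin: "\<And>g. finite (RR (E - {m}) (G - {g}))" using Suc.prems RR_finite by simp
  have injs: "\<And>g. inj_on (insert (m, g)) (RR (E - {m}) (G - {g}))"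
  proof (rule inj_onI)
    fix g A B assume A: "A \<in> RR (E - {m}) (G - {g})" and B: "B \<in> RR (E - {m}) (G - {g})"
      and AB: "insert (m, g) A = insert (m, g) B"
    have "(m, g) \<notin> A" using A unfolding RR_def by auto
    moreover have "(m, g) \<notin> B" using B unfolding RR_def by auto
    ultimately show "A = B" using AB by (metis insert_ident)
  qed
  have cards: "card (insert (m, g) ` RR (E - {m}) (G - {g})) = (\<Prod>e\<in>E - {m}. f e)"
    if g: "g \<in> {g\<in>G. m < g}" for g
  proof -
    have "card (RR (E - {m}) (G - {g})) =
        (\<Prod>e\<in>E - {m}. card {g'\<in>G - {g}. e < g'} - card {e'\<in>E - {m}. e < e'})"
      using Suc.IH[of "E - {m}" "G - {g}"] Suc.prems mE g by simp
    also have "\<dots> = (\<Prod>e\<in>E - {m}. f e)"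
    proof (rule prod.cong[OF refl])
      fix e assume e: "e \<in> E - {m}"
      have em: "e < m" using e mmax le_neq_implies_less by blast
      have "{g'\<in>G. e < g'} = insert g {g'\<in>G - {g}. e < g'}" using g em by auto
      then have c1: "card {g'\<in>G. e < g'} = Suc (card {g'\<in>G - {g}. e < g'})"
        using Suc.prems by simp
      have "{e'\<in>E. e < e'} = insert m {e'\<in>E - {m}. e < e'}" using mE em by auto
      then have c2: "card {e'\<in>E. e < e'} = Suc (card {e'\<in>E - {m}. e < e'})"
        using Suc.prems by simp
      show "card {g'\<in>G - {g}. e < g'} - card {e'\<in>E - {m}. e < e'} = f e"
        unfolding f_def c1 c2 by simp
    qed
    finally show ?thesis using card_image[OF injs] by simp
  qed
  have disj: "\<And>g g'. g \<in> {g\<in>G. m < g} \<Longrightarrow> g' \<in> {g\<in>G. m < g} \<Longrightarrow> g \<noteq> g' \<Longrightarrow>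
      insert (m, g) ` RR (E - {m}) (G - {g}) \<inter> insert (m, g') ` RR (E - {m}) (G - {g'}) = {}"
  proof -
    fix g g' :: nat assume "g \<noteq> g'"
    show "insert (m, g) ` RR (E - {m}) (G - {g}) \<inter> insert (m, g') ` RR (E - {m}) (G - {g'}) = {}"
    proof (rule ccontr)
      assume "insert (m, g) ` RR (E - {m}) (G - {g}) \<inter> insert (m, g') ` RR (E - {m}) (G - {g'}) \<noteq> {}"
      then obtain A B where A: "A \<in> RR (E - {m}) (G - {g})" and B: "B \<in> RR (E - {m}) (G - {g'})"
        and AB: "insert (m, g) A = insert (m, g') B" by blast
      have "(m, g) \<in> B" using AB \<open>g \<noteq> g'\<close> by (metis insertI1 insert_iff prod.inject)
      then show False using B unfolding RR_def by auto
    qed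
  qed
  have "card (RR E G) = (\<Sum>g\<in>{g\<in>G. m < g}. card (insert (m, g) ` RR (E - {m}) (G - {g})))"
    unfolding RR_decomp[OF Suc.prems(1) ne m_def]
    by (rule card_UN_disjoint) (use Suc.prems fin disj in auto)
  also have "\<dots> = card {g\<in>G. m < g} * (\<Prod>e\<in>E - {m}. f e)" using cards by simp
  also have "card {g\<in>G. m < g} = f m"
  proof -
    have "{e'\<in>E. m < e'} = {}" using mmax by (auto simp: leD)
    then have "card {e'\<in>E. m < e'} = 0" by (simp only: card.empty)
    then show ?thesis unfolding f_def by simp
  qed
  also have "f m * (\<Prod>e\<in>E - {m}. f e) = (\<Prod>e\<in>E. f e)"
    using prod.remove[OF Suc.prems(1) mE, of f] by simp
  finally show ?case unfolding f_def .
qed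




lemma part2:
  assumes E: "E \<in> possible_pivot_sets N"
  shows "card (pairings_for N E) = (\<Prod>n\<in>{1..N}. 2*n - nth_elem E n)"
proof -
  have Esub: "E \<subseteq> {1..2*N}" and cE: "card E = N"
    and bd: "\<And>n. n \<in> {1..N} \<Longrightarrow> n \<le> nth_elem E n \<and> nth_elem E n \<le> 2*n - 1"
    using E unfolding possible_pivot_sets_def by auto
  have finE: "finite E" using Esub finite_subset by blast
  define G where "G = {1..2*N} - E"
  have cG: "card G = N" unfolding G_def using Esub cE by (simp add: card_Diff_subset finE)
  have "pairings_for N E = RR E G" unfolding pairings_for_def RR_def G_def by simp
  then have "card (pairings_for N E) = (\<Prod>e\<in>E. card {g\<in>G. e < g} - card {e'\<in>E. e < e'})"
    using RR_card[of E G N] finE cE cG unfolding G_def by simp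
  also have "\<dots> = (\<Prod>n\<in>{1..N}. card {g\<in>G. nth_elem E n < g} - card {e'\<in>E. nth_elem E n < e'})"
  proof -
    define h where "h = (\<lambda>e. card {g\<in>G. e < g} - card {e'\<in>E. e < e'})"
    have Eim: "nth_elem E ` {1..N} = E"
    proof
      show "nth_elem E ` {1..N} \<subseteq> E"
      proof
        fix x assume "x \<in> nth_elem E ` {1..N}"
        then obtain n where n: "1 \<le> n" "n \<le> N" and x: "x = nth_elem E n" by auto
        have "n \<le> card E" using n cE by simp
        have "nth_elem E n \<in> E" by (rule nth_elem_in[OF finE n(1) \<open>n \<le> card E\<close>])
        then show "x \<in> E" using x by simp
      qed
      show "E \<subseteq> nth_elem E ` {1..N}"
      proof
        fix e assume "e \<in> E"
        then have "e \<in> set (sorted_list_of_set E)" using finE by simp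
        then obtain i where i: "i < N" "sorted_list_of_set E ! i = e"
          using cE by (auto simp: in_set_conv_nth)
        then have "nth_elem E (Suc i) = e" unfolding nth_elem_def by simp
        moreover have "Suc i \<in> {1..N}" using i by simp
        ultimately show "e \<in> nth_elem E ` {1..N}" by (metis image_eqI)
      qed
    qed
    have inj: "inj_on (nth_elem E) {1..N}"
    proof (rule inj_onI)
      fix a b assume a: "a \<in> {1..N}" and b: "b \<in> {1..N}" and ab: "nth_elem E a = nth_elem E b"
      have A1: "card {x\<in>E. x \<le> nth_elem E a} = a" by (rule nth_elem_card_le[OF finE]) (use a cE in auto)
      have B1: "card {x\<in>E. x \<le> nth_elem E b} = b" by (rule nth_elem_card_le[OF finE]) (use b cE in auto)
      have "a = card {x\<in>E. x \<le> nth_elem E a}" using A1 by (rule sym)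
      also have "\<dots> = card {x\<in>E. x \<le> nth_elem E b}" using ab by (rule arg_cong)
      also have "\<dots> = b" by (rule B1)
      finally show "a = b" .
    qed
    have "(\<Prod>n\<in>{1..N}. h (nth_elem E n)) = (\<Prod>e\<in>nth_elem E ` {1..N}. h e)"
      using prod.reindex[OF inj, of h] by (simp add: comp_def)
    also have "\<dots> = (\<Prod>e\<in>E. h e)" by (rule prod.cong[OF Eim refl])
    finally show ?thesis unfolding h_def by simp
  qed
  also have "\<dots> = (\<Prod>n\<in>{1..N}. 2*n - nth_elem E n)"
  proof (rule prod.cong[OF refl])
    fix n assume n: "n \<in> {1..N}"
    let ?e = "nth_elem E n"
    have n1: "1 \<le> n" and nN: "n \<le> card E" using n cE by auto
    have eE: "?e \<in> E" by (rule nth_elem_in[OF finE n1 nN])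
    have e2N: "?e \<le> 2*N" using eE Esub by auto
    have cle: "card {x\<in>E. x \<le> ?e} = n" by (rule nth_elem_card_le[OF finE n1 nN])
    have eq1: "{e'\<in>E. ?e < e'} = E - {x\<in>E. x \<le> ?e}" by auto
    have "card (E - {x\<in>E. x \<le> ?e}) = card E - card {x\<in>E. x \<le> ?e}"
      by (rule card_Diff_subset) (use finE in auto)
    then have c1: "card {e'\<in>E. ?e < e'} = N - n" using eq1 cle cE by simp
    have eq2: "{g\<in>G. ?e < g} = {?e<..2*N} - {e'\<in>E. ?e < e'}" unfolding G_def using Esub by auto
    have "card ({?e<..2*N} - {e'\<in>E. ?e < e'}) = card {?e<..2*N} - card {e'\<in>E. ?e < e'}"
      by (rule card_Diff_subset) (use finE Esub in auto)
    then have c2: "card {g\<in>G. ?e < g} = (2*N - ?e) - (N - n)" using eq2 c1 by simp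
    have b1: "?e \<le> 2*n - 1" and b2: "1 \<le> n" "n \<le> N" using bd[OF n] n by auto
    show "card {g\<in>G. ?e < g} - card {e'\<in>E. ?e < e'} = 2*n - ?e"
      unfolding c1 c2 using b1 b2 e2N by arith
  qed
  finally show ?thesis .
qed

definition BB :: "nat \<Rightarrow> nat \<Rightarrow> nat set set" where
  "BB L k = {E. E \<subseteq> {1..L} \<and> card E = k \<and> (\<forall>m\<in>{1..L}. m \<le> 2 * card {x\<in>E. x \<le> m})}"

lemma BB_finite: "finite (BB L k)"
proof -
  have "BB L k \<subseteq> Pow {1..L}" unfolding BB_def by auto
  then show ?thesis by (simp add: finite_subset)
qed

lemma pps_BB: "possible_pivot_sets N = BB (2*N) N"
proof
  show "possible_pivot_sets N \<subseteq> BB (2*N) N"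
  proof
    fix E assume E: "E \<in> possible_pivot_sets N"
    have Esub: "E \<subseteq> {1..2*N}" and cE: "card E = N"
      and bd: "\<And>n. n \<in> {1..N} \<Longrightarrow> n \<le> nth_elem E n \<and> nth_elem E n \<le> 2*n - 1"
      using E unfolding possible_pivot_sets_def by auto
    have finE: "finite E" using Esub finite_subset by blast
    have "m \<le> 2 * card {x\<in>E. x \<le> m}" if m: "m \<in> {1..2*N}" for m
    proof (rule ccontr)
      let ?c = "card {x\<in>E. x \<le> m}"
      assume "\<not> m \<le> 2 * ?c"
      then have lt: "2 * ?c < m" by simp
      then have "Suc ?c \<in> {1..N}" using m by auto
      then have "nth_elem E (Suc ?c) \<le> 2 * Suc ?c - 1" using bd by blast
      then have "nth_elem E (Suc ?c) \<le> m" using lt by simp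
      then have "Suc ?c \<le> ?c" using nth_elem_le_iff[OF finE, of "Suc ?c" m] \<open>Suc ?c \<in> {1..N}\<close> cE by simp
      then show False by simp
    qed
    then show "E \<in> BB (2*N) N" unfolding BB_def using Esub cE by auto
  qed
next
  show "BB (2*N) N \<subseteq> possible_pivot_sets N"
  proof
    fix E assume E: "E \<in> BB (2*N) N"
    have Esub: "E \<subseteq> {1..2*N}" and cE: "card E = N"
      and cond: "\<And>m. m \<in> {1..2*N} \<Longrightarrow> m \<le> 2 * card {x\<in>E. x \<le> m}"
      using E unfolding BB_def by auto
    have finE: "finite E" using Esub finite_subset by blast
    have "n \<le> nth_elem E n \<and> nth_elem E n \<le> 2*n - 1" if n: "n \<in> {1..N}" for n
    proof
      have "card {x\<in>E. x \<le> nth_elem E n} = n" using nth_elem_card_le[OF finE] n cE by simp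
      moreover have "{x\<in>E. x \<le> nth_elem E n} \<subseteq> {1..nth_elem E n}" using Esub by auto
      ultimately have "n \<le> card {1..nth_elem E n}" by (metis card_mono finite_atLeastAtMost)
      then show "n \<le> nth_elem E n" by simp
      have "2*n - 1 \<in> {1..2*N}" using n by auto
      then have "2*n - 1 \<le> 2 * card {x\<in>E. x \<le> 2*n - 1}" by (rule cond)
      then have "n \<le> card {x\<in>E. x \<le> 2*n - 1}" using n by simp
      then show "nth_elem E n \<le> 2*n - 1" using nth_elem_le_iff[OF finE] n cE by simp
    qed
    then show "E \<in> possible_pivot_sets N" unfolding possible_pivot_sets_def using Esub cE by auto
  qed
qed




lemma BB_Suc:
  "BB (Suc L) k = (if Suc L \<le> 2*k then BB L k \<union> insert (Suc L) ` BB L (k - 1) else {})"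
proof (cases "Suc L \<le> 2*k")
  case False
  have "BB (Suc L) k = {}"
  proof (rule ccontr)
    assume "BB (Suc L) k \<noteq> {}"
    then obtain E where E: "E \<in> BB (Suc L) k" by blast
    then have Esub: "E \<subseteq> {1..Suc L}" and cE: "card E = k"
      and c: "Suc L \<le> 2 * card {x\<in>E. x \<le> Suc L}" unfolding BB_def by auto
    have "{x\<in>E. x \<le> Suc L} = E" using Esub by auto
    then show False using c cE False by simp
  qed
  then show ?thesis using False by simp
next
  case True
  have "BB (Suc L) k = BB L k \<union> insert (Suc L) ` BB L (k - 1)"
  proof
    show "BB (Suc L) k \<subseteq> BB L k \<union> insert (Suc L) ` BB L (k - 1)"
    proof
      fix E assume E: "E \<in> BB (Suc L) k"
      then have Esub: "E \<subseteq> {1..Suc L}" and cE: "card E = k"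
        and c: "\<And>m. m \<in> {1..Suc L} \<Longrightarrow> m \<le> 2 * card {x\<in>E. x \<le> m}" unfolding BB_def by auto
      have finE: "finite E" using Esub finite_subset by blast
      show "E \<in> BB L k \<union> insert (Suc L) ` BB L (k - 1)"
      proof (cases "Suc L \<in> E")
        case False
        then have "E \<subseteq> {1..L}" using Esub by (auto simp: le_Suc_eq)
        then have "E \<in> BB L k" unfolding BB_def using cE c by auto
        then show ?thesis by simp
      next
        case True
        define E' where "E' = E - {Suc L}"
        have E'sub: "E' \<subseteq> {1..L}" using Esub E'_def by (auto simp: le_Suc_eq)
        have cE': "card E' = k - 1" using cE True finE E'_def by simp
        have "\<And>m. m \<in> {1..L} \<Longrightarrow> {x\<in>E'. x \<le> m} = {x\<in>E. x \<le> m}" using E'_def by auto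
        then have "E' \<in> BB L (k - 1)" unfolding BB_def using E'sub cE' c by auto
        moreover have "E = insert (Suc L) E'" using True E'_def by auto
        ultimately show ?thesis by blast
      qed
    qed
  next
    show "BB L k \<union> insert (Suc L) ` BB L (k - 1) \<subseteq> BB (Suc L) k"
    proof
      fix E assume "E \<in> BB L k \<union> insert (Suc L) ` BB L (k - 1)"
      then show "E \<in> BB (Suc L) k"
      proof
        assume E: "E \<in> BB L k"
        then have Esub: "E \<subseteq> {1..L}" and cE: "card E = k"
          and c: "\<And>m. m \<in> {1..L} \<Longrightarrow> m \<le> 2 * card {x\<in>E. x \<le> m}" unfolding BB_def by auto
        have "m \<le> 2 * card {x\<in>E. x \<le> m}" if m: "m \<in> {1..Suc L}" for m
        proof (cases "m = Suc L")
          case True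
          have "{x\<in>E. x \<le> m} = E" using Esub True by auto
          then show ?thesis using True \<open>Suc L \<le> 2*k\<close> cE by simp
        next
          case False
          then show ?thesis using c m by (simp add: le_Suc_eq)
        qed
        moreover have "E \<subseteq> {1..Suc L}" using Esub by auto
        ultimately show ?thesis unfolding BB_def using cE by blast
      next
        assume "E \<in> insert (Suc L) ` BB L (k - 1)"
        then obtain E' where E': "E' \<in> BB L (k - 1)" and EE: "E = insert (Suc L) E'" by blast
        then have Esub: "E' \<subseteq> {1..L}" and cE: "card E' = k - 1"
          and c: "\<And>m. m \<in> {1..L} \<Longrightarrow> m \<le> 2 * card {x\<in>E'. x \<le> m}" unfolding BB_def by auto
        have finE: "finite E'" using Esub finite_subset by blast
        have nin: "Suc L \<notin> E'" using Esub by auto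
        have k1: "1 \<le> k" using True by simp
        have cE2: "card E = k" using EE nin finE cE k1 by simp
        have "m \<le> 2 * card {x\<in>E. x \<le> m}" if m: "m \<in> {1..Suc L}" for m
        proof (cases "m = Suc L")
          case True
          have "{x\<in>E. x \<le> m} = E" using Esub True EE by auto
          then show ?thesis using True \<open>Suc L \<le> 2*k\<close> cE2 by simp
        next
          case False
          then have mL: "m \<in> {1..L}" using m by (simp add: le_Suc_eq)
          have "{x\<in>E. x \<le> m} = {x\<in>E'. x \<le> m}" using EE mL by auto
          then show ?thesis using c[OF mL] by simp
        qed
        moreover have "E \<subseteq> {1..Suc L}" using Esub EE by auto
        ultimately show ?thesis unfolding BB_def using cE2 by blast
      qed
    qed
  qed
  then show ?thesis using True by simp
qed

lemma BB_card:
  "int (card (BB L k)) = (if L \<le> 2*k then int (L choose k) - int (L choose Suc k) else 0)"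
proof (induction L arbitrary: k)
  case 0
  have "BB 0 k = (if k = 0 then {{}} else {})" unfolding BB_def by auto
  then show ?case by simp
next
  case (Suc L)
  show ?case
  proof (cases "Suc L \<le> 2*k")
    case False
    then show ?thesis by (simp add: BB_Suc)
  next
    case True
    then obtain j where kj: "k = Suc j" by (cases k) auto
    have disj: "BB L k \<inter> insert (Suc L) ` BB L (k - 1) = {}"
      unfolding BB_def by auto
    have inj: "inj_on (insert (Suc L)) (BB L (k - 1))"
    proof (rule inj_onI)
      fix A B assume A: "A \<in> BB L (k - 1)" and B: "B \<in> BB L (k - 1)" and AB: "insert (Suc L) A = insert (Suc L) B"
      have "Suc L \<notin> A" using A unfolding BB_def by auto
      moreover have "Suc L \<notin> B" using B unfolding BB_def by auto
      ultimately show "A = B" using AB by (metis insert_ident)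
    qed
    have "card (BB (Suc L) k) = card (BB L k) + card (BB L j)"
      using True BB_Suc[of L k] card_Un_disjoint[OF BB_finite BB_finite[THEN finite_imageI] disj]
        card_image[OF inj] kj by simp
    then have "int (card (BB (Suc L) k)) = int (card (BB L k)) + int (card (BB L j))" by simp
    also have "int (card (BB L k)) = int (L choose k) - int (L choose Suc k)"
      using Suc.IH[of k] True by simp
    also have "int (card (BB L j)) = int (L choose j) - int (L choose k)"
    proof (cases "L \<le> 2*j")
      case True
      then show ?thesis using Suc.IH[of j] kj by simp
    next
      case False
      then have L: "L = 2*j + 1" using \<open>Suc L \<le> 2*k\<close> kj by simp
      have "L choose j = L choose (L - j)" by (rule binomial_symmetric) (use L in simp)
      also have "L - j = k" using L kj by simp
      finally show ?thesis using Suc.IH[of j] False by simp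
    qed
    finally show ?thesis using True kj by simp
  qed
qed

lemma catalan_real:
  assumes "N \<ge> 1"
  shows "real (2*N choose N) - real (2*N choose Suc N) = fact (2*N) / (fact N * fact (N+1))"
proof -
  obtain M where NM: "N = Suc M" using assms by (cases N) auto
  have b1: "real (2*N choose N) = fact (2*N) / (fact N * fact N)"
    using binomial_fact[of N "2*N"] by simp
  have b2: "real (2*N choose Suc N) = fact (2*N) / (fact (Suc N) * fact M)"
    using binomial_fact[of "Suc N" "2*N"] NM by simp
  have fN: "(fact N :: real) = real N * fact M" using NM by simp
  have fSN: "(fact (Suc N) :: real) = (real N + 1) * (real N * fact M)" using fN by simp
  have pos: "(fact M :: real) > 0" by simp
  have Npos: "real N > 0" using assms by simp
  have alg: "\<And>F a n :: real. a > 0 \<Longrightarrow> n > 0 \<Longrightarrow>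
     F / ((n * a) * (n * a)) - F / (((n + 1) * (n * a)) * a) = F / ((n * a) * ((n + 1) * (n * a)))"
  proof -
    fix F a n :: real assume a: "a > 0" and n: "n > 0"
    define m where "m = n + 1"
    have m: "m > 0" using n m_def by simp
    define D where "D = n * a"
    have D: "D > 0" using a n D_def by simp
    have "F / (D * D) - F / ((m * D) * a) = F * (m * a - D) / (D * D * m * a)"
      using a m D by (simp add: field_simps)
    also have "m * a - D = a" unfolding m_def D_def by (simp add: algebra_simps)
    also have "F * a / (D * D * m * a) = F / (D * (m * D))" using a by simp
    finally show "F / ((n * a) * (n * a)) - F / (((n + 1) * (n * a)) * a) = F / ((n * a) * ((n + 1) * (n * a)))"
      unfolding m_def D_def .
  qed
  have fS: "(fact (N+1) :: real) = (real N + 1) * (real N * fact M)" using fN by simp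
  show ?thesis unfolding b1 b2 fSN fS fN by (rule alg[OF pos Npos])
qed

lemma part_catalan:
  assumes "N \<ge> 1"
  shows "real (card (possible_pivot_sets N)) = fact (2*N) / (fact N * fact (N+1))"
proof -
  have "int (card (possible_pivot_sets N)) = int (2*N choose N) - int (2*N choose Suc N)"
    unfolding pps_BB using BB_card[of "2*N" N] by simp
  then have "real (card (possible_pivot_sets N)) = real (2*N choose N) - real (2*N choose Suc N)"
    by (metis of_int_diff of_int_of_nat_eq)
  then show ?thesis using catalan_real[OF assms] by simp
qed




lemma part1:
  assumes N1: "N \<ge> 1" and el: "elastic_soliton_matrix N A"
  shows "let E = pivot_set N A in
           nth_elem E 1 = 1 \<and> nth_elem E N < 2*N \<and>
           (\<forall>n\<in>{1..N}. n \<le> nth_elem E n \<and> nth_elem E n \<le> 2*n - 1)"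
proof -
  define p where "p = pivot_col N A"
  define E where "E = pivot_set N A"
  have Ep: "E = p ` {1..N}" unfolding E_def pivot_set_def p_def by simp
  have rr: "rref_rank N A" using el unfolding elastic_soliton_matrix_def by (elim conjE)
  then have rr': "(\<forall>i\<in>{1..N}. \<exists>j\<in>{1..2*N}. A i j \<noteq> 0) \<and>
     (\<forall>i\<in>{1..N}. \<forall>i'\<in>{1..N}. i < i' \<longrightarrow> p i < p i') \<and>
     (\<forall>i\<in>{1..N}. A i (p i) = 1) \<and>
     (\<forall>i\<in>{1..N}. \<forall>k\<in>{1..N}. k \<noteq> i \<longrightarrow> A k (p i) = 0)"
    unfolding rref_rank_def p_def .
  have r1: "\<And>i. i \<in> {1..N} \<Longrightarrow> \<exists>j\<in>{1..2*N}. A i j \<noteq> 0"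
    using rr' by (elim conjE) (rule bspec)
  have r2: "\<And>i i'. i \<in> {1..N} \<Longrightarrow> i' \<in> {1..N} \<Longrightarrow> i < i' \<Longrightarrow> p i < p i'"
  proof -
    fix i i' assume "i \<in> {1..N}" "i' \<in> {1..N}" "i < i'"
    moreover have "\<forall>i\<in>{1..N}. \<forall>i'\<in>{1..N}. i < i' \<longrightarrow> p i < p i'" using rr' by (elim conjE)
    ultimately show "p i < p i'" by blast
  qed
  have r3: "\<And>i. i \<in> {1..N} \<Longrightarrow> A i (p i) = 1"
  proof -
    fix i assume "i \<in> {1..N}"
    moreover have "\<forall>i\<in>{1..N}. A i (p i) = 1" using rr' by (elim conjE)
    ultimately show "A i (p i) = 1" by blast
  qed
  have r4: "\<And>i k. i \<in> {1..N} \<Longrightarrow> k \<in> {1..N} \<Longrightarrow> k \<noteq> i \<Longrightarrow> A k (p i) = 0"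
  proof -
    fix i k assume "i \<in> {1..N}" "k \<in> {1..N}" "k \<noteq> i"
    moreover have "\<forall>i\<in>{1..N}. \<forall>k\<in>{1..N}. k \<noteq> i \<longrightarrow> A k (p i) = 0" using rr' by (elim conjE)
    ultimately show "A k (p i) = 0" by blast
  qed
  have dual: "\<And>S. S \<subseteq> {1..2*N} \<Longrightarrow> card S = N \<Longrightarrow>
      (minor N A S = 0 \<longleftrightarrow> minor N A ({1..2*N} - S) = 0)"
    using el unfolding elastic_soliton_matrix_def by blast
  have L1: "1 \<le> p i \<and> p i \<le> 2*N \<and> (\<forall>j. 1 \<le> j \<longrightarrow> j < p i \<longrightarrow> A i j = 0)" if i: "i \<in> {1..N}" for i
  proof -
    let ?P = "\<lambda>j. 1 \<le> j \<and> j \<le> 2*N \<and> A i j \<noteq> 0"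
    have ex: "\<exists>j. ?P j" using r1[OF i] by auto
    have pl: "p i = (LEAST j. ?P j)" unfolding p_def pivot_col_def by simp
    have "?P (p i)" unfolding pl by (rule LeastI_ex[OF ex])
    moreover have "A i j = 0" if "1 \<le> j" "j < p i" for j
    proof -
      have "\<not> ?P j" using not_less_Least[of j ?P] that(2) unfolding pl by blast
      moreover have "j \<le> 2*N" using \<open>?P (p i)\<close> that(2) by simp
      ultimately show ?thesis using that(1) by blast
    qed
    ultimately show ?thesis by blast
  qed
  have mono: "p i \<le> p j" if "i \<in> {1..N}" "j \<in> {1..N}" "i \<le> j" for i j
    using r2[OF that(1,2)] that(3) by (cases "i = j") auto
  have pge: "n \<le> p n" if "n \<in> {1..N}" for n
  proof -
    have "\<forall>n. 1 \<le> n \<longrightarrow> n \<le> N \<longrightarrow> n \<le> p n"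
    proof
      fix n show "1 \<le> n \<longrightarrow> n \<le> N \<longrightarrow> n \<le> p n"
      proof (induction n)
        case 0 then show ?case by simp
      next
        case (Suc n)
        show ?case
        proof (intro impI)
          assume a: "1 \<le> Suc n" "Suc n \<le> N"
          show "Suc n \<le> p (Suc n)"
          proof (cases "n = 0")
            case True then show ?thesis using L1[of 1] a by simp
          next
            case False
            then have "n \<le> p n" using Suc.IH a by simp
            moreover have "p n < p (Suc n)" using r2[of n "Suc n"] a False by simp
            ultimately show ?thesis by simp
          qed
        qed
      qed
    qed
    then show ?thesis using that by simp
  qed
  have injp: "inj_on p {1..N}"
  proof (rule inj_onI)
    fix a b assume "a \<in> {1..N}" "b \<in> {1..N}" "p a = p b"
    then show "a = b" using r2[of a b] r2[of b a] by (cases a b rule: linorder_cases) auto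
  qed
  have cE: "card E = N" unfolding Ep using card_image[OF injp] by simp
  have Esub: "E \<subseteq> {1..2*N}" unfolding Ep using L1 by auto
  have finE: "finite E" unfolding Ep by simp
  define LE where "LE = map p [1..<Suc N]"
  have sLE: "sorted_list_of_set E = LE"
  proof -
    have "sorted_wrt (<) LE"
      unfolding LE_def sorted_wrt_iff_nth_less
    proof (intro allI impI)
      fix i j assume ij: "i < j" "j < length (map p [1..<Suc N])"
      then have jN: "j < N" by (simp del: upt_Suc)
      then show "map p [1..<Suc N] ! i < map p [1..<Suc N] ! j"
        using r2[of "Suc i" "Suc j"] ij by (simp del: upt_Suc)
    qed
    moreover have "set LE = E" unfolding LE_def Ep by auto
    moreover have "length LE = card E" unfolding LE_def cE by (simp del: upt_Suc)
    ultimately show ?thesis using sorted_list_of_set_unique[OF finE] by blast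
  qed
  have nthp: "nth_elem E n = p n" if "n \<in> {1..N}" for n
  proof -
    have n0: "n \<noteq> 0" using that by simp
    obtain k where k: "n = Suc k" using n0 not0_implies_Suc by blast
    have kN: "k < length [1..<Suc N]" using that k by (simp del: upt_Suc)
    have "LE ! k = p ([1..<Suc N] ! k)" unfolding LE_def by (rule nth_map[OF kN])
    also have "[1..<Suc N] ! k = 1 + k" using kN by (simp del: upt_Suc)
    finally have "LE ! (n - 1) = p (1 + (n - 1))" using k by simp
    then show ?thesis unfolding nth_elem_def sLE using that by simp
  qed
  have LEp: "LE ! (k - 1) = p k" if "k \<in> {1..N}" for k
    using nthp[OF that] unfolding nth_elem_def sLE .
  have minorE: "minor N A E = 1"
  proof -
    have "minor N A E = (\<Sum>\<sigma> | \<sigma> permutes {1..N}. (if \<sigma> = id then 1 else 0))"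
      unfolding minor_def sLE
    proof (rule sum.cong[OF refl])
      fix \<sigma> assume "\<sigma> \<in> {\<sigma>. \<sigma> permutes {1..N}}"
      then have sp: "\<sigma> permutes {1..N}" by simp
      have img: "\<And>i. i \<in> {1..N} \<Longrightarrow> \<sigma> i \<in> {1..N}" using permutes_in_image[OF sp] by blast
      have prodeq: "(\<Prod>i\<in>{1..N}. A i (LE ! (\<sigma> i - 1))) = (\<Prod>i\<in>{1..N}. A i (p (\<sigma> i)))"
        using LEp img by (intro prod.cong) auto
      show "of_int (sign \<sigma>) * (\<Prod>i\<in>{1..N}. A i (LE ! (\<sigma> i - 1))) = (if \<sigma> = id then 1 else 0)"
      proof (cases "\<sigma> = id")
        case True
        then show ?thesis unfolding prodeq using r3 by simp
      next
        case False
        have "\<exists>i\<in>{1..N}. \<sigma> i \<noteq> i"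
        proof (rule ccontr)
          assume "\<not> (\<exists>i\<in>{1..N}. \<sigma> i \<noteq> i)"
          then have "\<And>x. \<sigma> x = x" using permutes_not_in[OF sp] by blast
          then have "\<sigma> = id" by auto
          then show False using False by simp
        qed
        then obtain i where i: "i \<in> {1..N}" "\<sigma> i \<noteq> i" by blast
        have "A i (p (\<sigma> i)) = 0" using r4[OF img[OF i(1)] i(1)] i(2) by simp
        then have "(\<Prod>i\<in>{1..N}. A i (p (\<sigma> i))) = 0" using i(1) by (intro prod_zero) auto
        then show ?thesis unfolding prodeq using False by simp
      qed
    qed
    also have "\<dots> = 1" by (simp add: finite_permutations)
    finally show ?thesis .
  qed
  define G where "G = {1..2*N} - E"
  have minorG: "minor N A G \<noteq> 0" using dual[OF Esub cE] minorE unfolding G_def by simp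
  have cG: "card G = N" unfolding G_def using Esub cE finE by (simp add: card_Diff_subset)
  have finG: "finite G" unfolding G_def by simp
  have ub: "p n \<le> 2*n - 1" if n: "n \<in> {1..N}" for n
  proof (rule ccontr)
    assume "\<not> p n \<le> 2*n - 1"
    then have big: "2*n \<le> p n" by simp
    have sub1: "p ` {1..<n} \<subseteq> {1..<p n}"
    proof
      fix x assume "x \<in> p ` {1..<n}"
      then obtain i where i: "i \<in> {1..<n}" "x = p i" by auto
      have "i \<in> {1..N}" using i n by auto
      then show "x \<in> {1..<p n}" using L1[of i] r2[of i n] i n by auto
    qed
    have "{1..<n} \<subseteq> {1..N}" using n by auto
    then have "card (p ` {1..<n}) = card {1..<n}" using card_image[OF inj_on_subset[OF injp]] by blast
    then have cp: "card (p ` {1..<n}) = n - 1" by simp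
    have cD: "card ({1..<p n} - p ` {1..<n}) = (p n - 1) - (n - 1)"
      using card_Diff_subset[OF _ sub1] cp by simp
    have sub2: "{1..<p n} - p ` {1..<n} \<subseteq> {x\<in>G. x < p n}"
    proof
      fix x assume x: "x \<in> {1..<p n} - p ` {1..<n}"
      have "x \<le> 2*N" using x L1[OF n] by auto
      moreover have "x \<notin> E"
      proof
        assume "x \<in> E"
        then obtain i where i: "i \<in> {1..N}" "x = p i" unfolding Ep by auto
        show False
        proof (cases "i < n")
          case True then show False using x i by auto
        next
          case False then have "p n \<le> p i" using mono[OF n i(1)] by simp
          then show False using x i by auto
        qed
      qed
      ultimately show "x \<in> {x\<in>G. x < p n}" using x unfolding G_def by auto
    qed
    have cnt: "n \<le> card {x\<in>G. x < p n}"
    proof -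
      have "card ({1..<p n} - p ` {1..<n}) \<le> card {x\<in>G. x < p n}"
        by (rule card_mono) (use finG sub2 in auto)
      then show ?thesis using cD big n by simp
    qed
    have "minor N A G = 0"
      unfolding minor_def
    proof (rule sum.neutral, rule ballI)
      fix \<sigma> assume "\<sigma> \<in> {\<sigma>. \<sigma> permutes {1..N}}"
      then have sp: "\<sigma> permutes {1..N}" by simp
      have img: "\<And>i. i \<in> {1..N} \<Longrightarrow> \<sigma> i \<in> {1..N}" using permutes_in_image[OF sp] by blast
      have "\<exists>i\<in>{n..N}. \<sigma> i \<le> n"
      proof (rule ccontr)
        assume "\<not> (\<exists>i\<in>{n..N}. \<sigma> i \<le> n)"
        then have H: "\<And>i. i \<in> {n..N} \<Longrightarrow> n < \<sigma> i" using not_le by blast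
        have "\<sigma> ` {n..N} \<subseteq> {Suc n..N}"
        proof
          fix y assume "y \<in> \<sigma> ` {n..N}"
          then obtain i where i: "i \<in> {n..N}" "y = \<sigma> i" by blast
          have "i \<in> {1..N}" using i n by auto
          then have "\<sigma> i \<in> {1..N}" by (rule img)
          then show "y \<in> {Suc n..N}" using H[OF i(1)] i(2) by auto
        qed
        then have "card (\<sigma> ` {n..N}) \<le> card {Suc n..N}" by (intro card_mono) auto
        moreover have "card (\<sigma> ` {n..N}) = card {n..N}"
          by (rule card_image[OF permutes_inj_on[OF sp]])
        ultimately show False using n by auto
      qed
      then obtain i where i: "i \<in> {n..N}" "\<sigma> i \<le> n" by blast
      have iN: "i \<in> {1..N}" using i n by auto
      have si: "\<sigma> i \<in> {1..N}" using img[OF iN] .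
      let ?g = "sorted_list_of_set G ! (\<sigma> i - 1)"
      have "?g < p n" by (rule sl_less[OF finG]) (use cnt i si in auto)
      moreover have "p n \<le> p i" using mono[OF n iN] i by simp
      moreover have "?g \<in> G"
      proof -
        have "\<sigma> i - 1 < length (sorted_list_of_set G)" using si cG by auto
        then have "?g \<in> set (sorted_list_of_set G)" by (rule nth_mem)
        then show ?thesis using finG by simp
      qed
      then have "1 \<le> ?g" unfolding G_def by auto
      ultimately have "A i ?g = 0" using L1[OF iN] by auto
      then have "(\<Prod>i\<in>{1..N}. A i (sorted_list_of_set G ! (\<sigma> i - 1))) = 0"
        using iN by (intro prod_zero) auto
      then show "of_int (sign \<sigma>) * (\<Prod>i\<in>{1..N}. A i (sorted_list_of_set G ! (\<sigma> i - 1))) = 0"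
        by simp
    qed
    then show False using minorG by simp
  qed
  have "nth_elem E 1 = 1" using nthp[of 1] pge[of 1] ub[of 1] N1 by simp
  moreover have "nth_elem E N < 2*N" using nthp[of N] ub[of N] N1 by simp
  moreover have "\<forall>n\<in>{1..N}. n \<le> nth_elem E n \<and> nth_elem E n \<le> 2*n - 1"
    using nthp pge ub by simp
  ultimately show ?thesis unfolding E_def Let_def by blast
qed



theorem proposition4:
  fixes N :: nat
  assumes "N \<ge> 1"
  shows
    "(\<forall>A. elastic_soliton_matrix N A \<longrightarrow>
        (let E = pivot_set N A in
           nth_elem E 1 = 1 \<and> nth_elem E N < 2*N \<and>
           (\<forall>n\<in>{1..N}. n \<le> nth_elem E n \<and> nth_elem E n \<le> 2*n - 1))) \<and>
     real (card (possible_pivot_sets N)) = fact (2*N) / (fact N * fact (N+1)) \<and>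
     (\<forall>E\<in>possible_pivot_sets N.
        card (pairings_for N E) = (\<Prod>n\<in>{1..N}. 2*n - nth_elem E n)) \<and>
     card (all_pairings N) = odd_double_fact N"
proof (intro conjI allI impI ballI)
  fix A assume "elastic_soliton_matrix N A"
  then show "let E = pivot_set N A in
           nth_elem E 1 = 1 \<and> nth_elem E N < 2*N \<and>
           (\<forall>n\<in>{1..N}. n \<le> nth_elem E n \<and> nth_elem E n \<le> 2*n - 1)"
    by (rule part1[OF assms])
next
  show "real (card (possible_pivot_sets N)) = fact (2*N) / (fact N * fact (N+1))"
    by (rule part_catalan[OF assms])
next
  fix E assume "E \<in> possible_pivot_sets N"
  then show "card (pairings_for N E) = (\<Prod>n\<in>{1..N}. 2*n - nth_elem E n)"
    by (rule part2)
next
  show "card (all_pairings N) = odd_double_fact N" by (rule part3)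
qed

end
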